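(* Let $\theta,\omega:[0,\varepsilon[\times\mathbb S^1\to\mathbb R$ be of class $C^1$, and write $\bar\theta(t)=\theta(0,t)$, $\bar\omega(t)=\omega(0,t)$. For $\mu\in[0,1]$ let $\varphi^\mu(r,t)=\mu\,\omega(r,t)+(1-\mu)\,\theta(r,t)$. Suppose that $\bar\theta_t<-\lambda_t\sin(2\bar\theta)$ and $\bar\omega(t)=\bar\theta(t)$ for all $t\in\mathbb S^1$. Then there is $\rho_0>0$ such that for all $\mu\in[0,1]$ the surface $H^\mu(r,t)=(r\,u_{\varphi^\mu(r,t)},t)$ is transversal to the vector field $Y$ at all points $(r,t)$ with $0<r<\rho_0$, $t\in\mathbb S^1$.
   Context: $\mathbb S^1=\mathbb R/\mathbb Z$, $u_\beta=(\cos\beta,\sin\beta)\in\mathbb R^2$. In coordinates $(x,y,t)\in\mathbb D_\varepsilon\times\mathbb S^1$ around a period-1 hyperbolic periodic orbit $\Gamma=\{(0,0,t)\}$ of a Reeb flow (with $x$, $y$ axes along the unstable and stable directions), $Y$ is the reparametrization $Y=X/f_3$ of the Reeb vector field $X=(f_1,f_2,f_3)$, so that $Y(x,y,t)=(\lambda_tx,-\lambda_ty,1)+O(x^2+y^2)$ in the first two components and third component $1$, where $t\mapsto\lambda_t$ is a 1-periodic function. Subscripts $t$ and $r$ denote partial derivatives. *)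

theory Defs
  imports "HOL-Analysis.Analysis"
begin

text \<open>Points of D_eps x S^1 are triples (x, y, t); the circle coordinate t is
  taken in the real line, with all data 1-periodic in t.\<close>

text \<open>u_beta = (cos beta, sin beta); the surface H(r,t) = (r u_{phi(r,t)}, t).\<close>
definition surfH :: "(real \<Rightarrow> real \<Rightarrow> real) \<Rightarrow> real \<times> real \<Rightarrow> real \<times> real \<times> real" where
  "surfH phi = (\<lambda>(r, t). (r * cos (phi r t), r * sin (phi r t), t))"

definition transversal_at ::
  "(real \<times> real \<Rightarrow> real \<times> real \<times> real) \<Rightarrow> (real \<times> real \<times> real \<Rightarrow> real \<times> real \<times> real)
     \<Rightarrow> real \<times> real \<Rightarrow> bool" where
  "transversal_at H Y p \<longleftrightarrow>
     (\<exists>H'. (H has_derivative H') (at p) \<and> Y (H p) \<notin> span {H' (1, 0), H' (0, 1)})"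

definition C1_strip :: "real \<Rightarrow> (real \<Rightarrow> real \<Rightarrow> real) \<Rightarrow> (real \<Rightarrow> real \<Rightarrow> real)
     \<Rightarrow> (real \<Rightarrow> real \<Rightarrow> real) \<Rightarrow> bool" where
  "C1_strip eps f fr ft \<longleftrightarrow>
     (\<forall>r t. 0 \<le> r \<and> r < eps \<longrightarrow> f r (t + 1) = f r t) \<and>
     (\<forall>r t. 0 \<le> r \<and> r < eps \<longrightarrow>
        ((\<lambda>(a, b). f a b) has_derivative (\<lambda>(h, k). h * fr r t + k * ft r t))
          (at (r, t) within {0..<eps} \<times> UNIV)) \<and>
     continuous_on ({0..<eps} \<times> UNIV) (\<lambda>(a, b). fr a b) \<and>
     continuous_on ({0..<eps} \<times> UNIV) (\<lambda>(a, b). ft a b)"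

end

theory Submission
  imports Defs
begin

lemma sin_lip: "\<bar>sin (a::real) - sin b\<bar> \<le> \<bar>a - b\<bar>"
proof -
  have "\<bar>sin a - sin b\<bar> = 2 * \<bar>sin ((a - b) / 2)\<bar> * \<bar>cos ((a + b) / 2)\<bar>"
    by (simp add: sin_diff_sin abs_mult)
  also have "\<dots> \<le> 2 * \<bar>sin ((a - b) / 2)\<bar>"
    by (simp add: mult_left_le)
  also have "\<dots> \<le> 2 * \<bar>(a - b) / 2\<bar>"
    using abs_sin_x_le_abs_x[of "(a - b) / 2"] by simp
  finally show ?thesis by simp
qed

lemma per_nat:
  assumes "\<And>t. g (t + 1) = g (t::real)"
  shows "g (t + real n) = g t"
proof (induction n)
  case 0 then show ?case by simp
next
  case (Suc n)
  have "g (t + real (Suc n)) = g ((t + real n) + 1)" by (simp add: algebra_simps)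
  also have "\<dots> = g (t + real n)" by (rule assms)
  finally show ?case using Suc by simp
qed

lemma per_int:
  assumes "\<And>t. g (t + 1) = g (t::real)"
  shows "g (t + real_of_int k) = g t"
proof (cases "k \<ge> 0")
  case True
  then obtain n where "k = int n" using nonneg_int_cases by blast
  then show ?thesis using per_nat[of g, OF assms] by simp
next
  case False
  then have "- k \<ge> 0" by simp
  then obtain n where "- k = int n" using nonneg_int_cases by blast
  then have n: "k = - int n" by simp
  have "g t = g ((t - real n) + real n)" by simp
  also have "\<dots> = g (t - real n)" using per_nat[of g, OF assms] by blast
  finally show ?thesis using n by simp
qed

lemma per_frac:
  assumes "\<And>t. g (t + 1) = g (t::real)"
  shows "g t = g (frac t)"
proof -
  have "g (frac t) = g (frac t + real_of_int \<lfloor>t\<rfloor>)" using per_int[of g, OF assms] by metis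
  then show ?thesis by (simp add: frac_def)
qed


lemma C1_D:
  assumes "C1_strip eps f fr ft"
  shows "\<And>p. p \<in> {0..<eps} \<times> UNIV \<Longrightarrow> ((\<lambda>(a, b). f a b) has_derivative
            (\<lambda>(h, k). h * fr (fst p) (snd p) + k * ft (fst p) (snd p))) (at p within {0..<eps} \<times> UNIV)"
  using assms unfolding C1_strip_def by (auto simp: split_beta)

lemma C1_dt:
  assumes "C1_strip eps f fr ft" "0 \<le> r" "r < eps"
  shows "((\<lambda>b. f r b) has_real_derivative ft r t) (at t)"
proof -
  have "((\<lambda>b. (\<lambda>(a, b). f a b) ((\<lambda>b. (r, b)) b)) has_derivative
      (\<lambda>y. (\<lambda>(h, k). h * fr (fst (r, t)) (snd (r, t)) + k * ft (fst (r, t)) (snd (r, t))) ((\<lambda>k. (0, k)) y))) (at t within UNIV)"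
    apply (rule has_derivative_in_compose2[OF C1_D[OF assms(1)]])
    using assms by (auto intro!: derivative_eq_intros)
  moreover have "(\<lambda>h. h * ft r t) = (*) (ft r t)" by (auto simp: fun_eq_iff mult.commute)
  ultimately show ?thesis by (simp add: has_field_derivative_def)
qed

lemma C1_dr:
  assumes "C1_strip eps f fr ft" "0 < r" "r < eps"
  shows "((\<lambda>a. f a t) has_real_derivative fr r t) (at r)"
proof -
  have "((\<lambda>a. (\<lambda>(a, b). f a b) ((\<lambda>a. (a, t)) a)) has_derivative
      (\<lambda>y. (\<lambda>(h, k). h * fr (fst (r, t)) (snd (r, t)) + k * ft (fst (r, t)) (snd (r, t))) ((\<lambda>h. (h, 0)) y))) (at r within {0..<eps})"
    apply (rule has_derivative_in_compose2[OF C1_D[OF assms(1)]])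
    using assms by (auto intro!: derivative_eq_intros)
  then have "((\<lambda>a. f a t) has_derivative (\<lambda>h. h * fr r t)) (at r within {0<..<eps})"
    by (auto intro: has_derivative_subset)
  then have "((\<lambda>a. f a t) has_derivative (\<lambda>h. h * fr r t)) (at r)"
    using at_within_open[of r "{0<..<eps}"] assms by simp
  moreover have "(\<lambda>h. h * fr r t) = (*) (fr r t)" by (auto simp: fun_eq_iff mult.commute)
  ultimately show ?thesis by (simp add: has_field_derivative_def)
qed

lemma C1_at:
  assumes "C1_strip eps f fr ft" "0 < r" "r < eps"
  shows "((\<lambda>p. f (fst p) (snd p)) has_derivative (\<lambda>p. fst p * fr r t + snd p * ft r t)) (at (r, t))"
proof -
  have "((\<lambda>(a, b). f a b) has_derivative (\<lambda>(h, k). h * fr r t + k * ft r t)) (at (r, t) within {0<..<eps} \<times> UNIV)"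
    using C1_D[OF assms(1), of "(r, t)"] assms by (auto intro: has_derivative_subset)
  then have "((\<lambda>(a, b). f a b) has_derivative (\<lambda>(h, k). h * fr r t + k * ft r t)) (at (r, t))"
    using at_within_open[of "(r, t)" "{0<..<eps} \<times> UNIV"] assms by (simp add: open_Times)
  moreover have "(\<lambda>(a, b). f a b) = (\<lambda>p. f (fst p) (snd p))" by auto
  moreover have "(\<lambda>(h, k). h * fr r t + k * ft r t) = (\<lambda>p. fst p * fr r t + snd p * ft r t)" by auto
  ultimately show ?thesis by metis
qed

lemma C1_cont:
  assumes "C1_strip eps f fr ft"
  shows "continuous_on ({0..<eps} \<times> UNIV) (\<lambda>(a, b). f a b)"
  unfolding continuous_on_eq_continuous_within
  using C1_D[OF assms] has_derivative_continuous by blast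

lemma C1_per_t:
  assumes "C1_strip eps f fr ft" "0 \<le> r" "r < eps"
  shows "ft r (t + 1) = ft r t"
proof -
  have per: "(\<lambda>b. f r (b + 1)) = (\<lambda>b. f r b)"
    using assms unfolding C1_strip_def by auto
  have "((\<lambda>b. f r (b + 1)) has_real_derivative ft r (t + 1)) (at t)"
    using C1_dt[OF assms, of "t + 1"] DERIV_shift by blast
  then have "((\<lambda>b. f r b) has_real_derivative ft r (t + 1)) (at t)" using per by simp
  then show ?thesis using C1_dt[OF assms, of t] DERIV_unique by blast
qed

lemma C1_per_r:
  assumes "C1_strip eps f fr ft" "0 < r" "r < eps"
  shows "fr r (t + 1) = fr r t"
proof -
  have e: "((\<lambda>a. f a (t + 1)) has_real_derivative fr r (t + 1)) (at r)"
    using C1_dr[OF assms, of "t + 1"] by blast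
  have "((\<lambda>a. f a t) has_real_derivative fr r (t + 1)) (at r)"
  proof (rule has_field_derivative_transform_within_open[OF e, of "{0<..<eps}"])
    show "\<And>x. x \<in> {0<..<eps} \<Longrightarrow> f x (t + 1) = f x t" using assms unfolding C1_strip_def by auto
  qed (use assms in auto)
  then show ?thesis using C1_dr[OF assms, of t] DERIV_unique by blast
qed


lemma surfH_deriv:
  assumes "((\<lambda>p. \<Phi> (fst p) (snd p)) has_derivative (\<lambda>p. fst p * a + snd p * b)) (at (r, t))"
  shows "(surfH \<Phi> has_derivative (\<lambda>(h, k). (h * (cos (\<Phi> r t) - r * sin (\<Phi> r t) * a) + k * (- r * sin (\<Phi> r t) * b),
            h * (sin (\<Phi> r t) + r * cos (\<Phi> r t) * a) + k * (r * cos (\<Phi> r t) * b), k))) (at (r, t))"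
proof -
  have e: "surfH \<Phi> = (\<lambda>p. (fst p * cos (\<Phi> (fst p) (snd p)), fst p * sin (\<Phi> (fst p) (snd p)), snd p))"
    by (auto simp: surfH_def fun_eq_iff)
  have P: "((\<lambda>p. \<Phi> (fst p) (snd p)) has_derivative (\<lambda>p. fst p * a + snd p * b)) (at (r, t))"
    by (rule assms)
  have "(cos has_derivative (*) (- sin (\<Phi> r t))) (at (\<Phi> r t))"
    using DERIV_cos[of "\<Phi> r t"] unfolding has_field_derivative_def .
  then have "(cos has_derivative (*) (- sin (\<Phi> r t))) (at (\<Phi> (fst (r, t)) (snd (r, t))))"
    by (simp only: fst_conv snd_conv)
  from has_derivative_compose[OF P this]
  have cd: "((\<lambda>p. cos (\<Phi> (fst p) (snd p))) has_derivative (\<lambda>p. - sin (\<Phi> r t) * (fst p * a + snd p * b))) (at (r, t))" .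
  have "(sin has_derivative (*) (cos (\<Phi> r t))) (at (\<Phi> r t))"
    using DERIV_sin[of "\<Phi> r t"] unfolding has_field_derivative_def .
  then have "(sin has_derivative (*) (cos (\<Phi> r t))) (at (\<Phi> (fst (r, t)) (snd (r, t))))"
    by (simp only: fst_conv snd_conv)
  from has_derivative_compose[OF P this]
  have sd: "((\<lambda>p. sin (\<Phi> (fst p) (snd p))) has_derivative (\<lambda>p. cos (\<Phi> r t) * (fst p * a + snd p * b))) (at (r, t))" .
  have fd: "((\<lambda>p::real \<times> real. fst p) has_derivative fst) (at (r, t))"
    by (rule bounded_linear_imp_has_derivative[OF bounded_linear_fst])
  have snd_d: "((\<lambda>p::real \<times> real. snd p) has_derivative snd) (at (r, t))"
    by (rule bounded_linear_imp_has_derivative[OF bounded_linear_snd])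
  have "((\<lambda>p. (fst p * cos (\<Phi> (fst p) (snd p)), fst p * sin (\<Phi> (fst p) (snd p)), snd p)) has_derivative
     (\<lambda>h. (fst (r, t) * (- sin (\<Phi> r t) * (fst h * a + snd h * b)) + fst h * cos (\<Phi> (fst (r, t)) (snd (r, t))),
           fst (r, t) * (cos (\<Phi> r t) * (fst h * a + snd h * b)) + fst h * sin (\<Phi> (fst (r, t)) (snd (r, t))),
           snd h))) (at (r, t))"
    by (intro has_derivative_Pair has_derivative_mult fd snd_d cd sd)
  then show ?thesis unfolding e
    by (rule has_derivative_eq_rhs) (auto simp: fun_eq_iff algebra_simps)
qed

lemma transv_det:
  fixes Y1 Y2 :: "real \<times> real \<times> real \<Rightarrow> real"
  assumes H: "(surfH \<Phi> has_derivative (\<lambda>(h, k). (h * (cos (\<Phi> r t) - r * sin (\<Phi> r t) * a) + k * (- r * sin (\<Phi> r t) * b),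
            h * (sin (\<Phi> r t) + r * cos (\<Phi> r t) * a) + k * (r * cos (\<Phi> r t) * b), k))) (at (r, t))"
    and D: "(Y1 (surfH \<Phi> (r, t)) + r * sin (\<Phi> r t) * b) * (sin (\<Phi> r t) + r * cos (\<Phi> r t) * a)
          - (Y2 (surfH \<Phi> (r, t)) - r * cos (\<Phi> r t) * b) * (cos (\<Phi> r t) - r * sin (\<Phi> r t) * a) \<noteq> 0"
  shows "transversal_at (surfH \<Phi>) (\<lambda>p. (Y1 p, Y2 p, 1)) (r, t)"
  unfolding transversal_at_def
proof (intro exI conjI, rule H)
  define c where "c = cos (\<Phi> r t)"
  define s where "s = sin (\<Phi> r t)"
  define y1 where "y1 = Y1 (surfH \<Phi> (r, t))"
  define y2 where "y2 = Y2 (surfH \<Phi> (r, t))"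
  show "(\<lambda>p. (Y1 p, Y2 p, 1)) (surfH \<Phi> (r, t)) \<notin> span {(\<lambda>(h, k). (h * (cos (\<Phi> r t) - r * sin (\<Phi> r t) * a) + k * (- r * sin (\<Phi> r t) * b),
            h * (sin (\<Phi> r t) + r * cos (\<Phi> r t) * a) + k * (r * cos (\<Phi> r t) * b), k)) (1, 0),
            (\<lambda>(h, k). (h * (cos (\<Phi> r t) - r * sin (\<Phi> r t) * a) + k * (- r * sin (\<Phi> r t) * b),
            h * (sin (\<Phi> r t) + r * cos (\<Phi> r t) * a) + k * (r * cos (\<Phi> r t) * b), k)) (0, 1)}"
    (is "?y \<notin> span ?S")
  proof
    assume "?y \<in> span ?S"
    then obtain k where "?y - k *\<^sub>R (c - r * s * a, s + r * c * a, 0) \<in> span {(- r * s * b, r * c * b, 1)}"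
      unfolding span_insert c_def s_def by auto
    then obtain l where kl: "?y - k *\<^sub>R (c - r * s * a, s + r * c * a, 0) = l *\<^sub>R (- r * s * b, r * c * b, 1)"
      unfolding span_singleton by auto
    then have "y1 - k * (c - r * s * a) = l * (- r * s * b)" "y2 - k * (s + r * c * a) = l * (r * c * b)" "1 = l"
      unfolding y1_def y2_def by auto
    then have e1: "y1 - k * (c - r * s * a) = - r * s * b" and e2: "y2 - k * (s + r * c * a) = r * c * b"
      by auto
    have "(y1 + r * s * b) * (s + r * c * a) - (y2 - r * c * b) * (c - r * s * a) = 0"
    proof -
      have y1e: "y1 = k * (c - r * s * a) - r * s * b" using e1 by simp
      have y2e: "y2 = k * (s + r * c * a) + r * c * b" using e2 by simp
      show ?thesis unfolding y1e y2e by algebra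
    qed
    then show False using D unfolding c_def s_def y1_def y2_def by simp
  qed
qed


lemma unif_near0:
  fixes F :: "real \<Rightarrow> real \<Rightarrow> real"
  assumes cont: "continuous_on ({0..<eps} \<times> UNIV) (\<lambda>(a, b). F a b)" and eps: "eps > 0"
    and per: "\<And>r t. 0 \<le> r \<Longrightarrow> r < eps \<Longrightarrow> F r (t + 1) = F r t" and e: "e > 0"
  shows "\<exists>d>0. \<forall>r t. 0 \<le> r \<and> r < d \<longrightarrow> \<bar>F r t - F 0 t\<bar> < e"
proof -
  let ?K = "{0..eps/2} \<times> {0..1::real}"
  have "continuous_on ?K (\<lambda>(a, b). F a b)"
    by (rule continuous_on_subset[OF cont]) (use eps in auto)
  then have "uniformly_continuous_on ?K (\<lambda>(a, b). F a b)"
    by (intro compact_uniformly_continuous compact_Times compact_Icc)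
  then have "\<exists>d>0. \<forall>x\<in>?K. \<forall>x'\<in>?K. dist x' x < d \<longrightarrow> dist ((\<lambda>(a, b). F a b) x') ((\<lambda>(a, b). F a b) x) < e"
    unfolding uniformly_continuous_on_def using e by blast
  then obtain d where d: "d > 0" and
    dd: "\<And>x x'. x \<in> ?K \<Longrightarrow> x' \<in> ?K \<Longrightarrow> dist x' x < d \<Longrightarrow> dist ((\<lambda>(a, b). F a b) x') ((\<lambda>(a, b). F a b) x) < e"
    by blast
  show ?thesis
  proof (intro exI[of _ "min d (eps/2)"] conjI allI impI)
    show "min d (eps/2) > 0" using d eps by simp
    fix r t assume r: "0 \<le> r \<and> r < min d (eps/2)"
    have p1: "F r t = F r (frac t)" by (rule per_frac[of "F r"]) (use per r in auto)
    have p0: "F 0 t = F 0 (frac t)" by (rule per_frac[of "F 0"]) (use per eps in auto)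
    have "dist (r, frac t) (0, frac t) < d" using r by (simp add: dist_Pair_Pair dist_real_def)
    then have "dist ((\<lambda>(a, b). F a b) (r, frac t)) ((\<lambda>(a, b). F a b) (0, frac t)) < e"
      using r eps frac_ge_0[of t] frac_lt_1[of t] by (intro dd) auto
    then show "\<bar>F r t - F 0 t\<bar> < e" by (simp add: dist_real_def p1 p0)
  qed
qed

lemma bound_strip:
  fixes F :: "real \<Rightarrow> real \<Rightarrow> real"
  assumes cont: "continuous_on ({0..<eps} \<times> UNIV) (\<lambda>(a, b). F a b)" and eps: "eps > 0"
    and per: "\<And>r t. 0 < r \<Longrightarrow> r < eps \<Longrightarrow> F r (t + 1) = F r t"
  shows "\<exists>B\<ge>0. \<forall>r t. 0 < r \<and> r \<le> eps/2 \<longrightarrow> \<bar>F r t\<bar> \<le> B"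
proof -
  let ?K = "{0..eps/2} \<times> {0..1::real}"
  have "continuous_on ?K (\<lambda>(a, b). F a b)"
    by (rule continuous_on_subset[OF cont]) (use eps in auto)
  then have "compact ((\<lambda>(a, b). F a b) ` ?K)"
    by (intro compact_continuous_image compact_Times compact_Icc)
  then have "bounded ((\<lambda>(a, b). F a b) ` ?K)" by (rule compact_imp_bounded)
  then obtain B where B: "\<And>x. x \<in> (\<lambda>(a, b). F a b) ` ?K \<Longrightarrow> \<bar>x\<bar> \<le> B"
    unfolding bounded_real by blast
  show ?thesis
  proof (intro exI[of _ "max B 0"] conjI allI impI)
    fix r t assume r: "0 < r \<and> r \<le> eps/2"
    have p1: "F r t = F r (frac t)" by (rule per_frac[of "F r"]) (use per r eps in auto)
    have "(r, frac t) \<in> ?K" using r frac_ge_0[of t] frac_lt_1[of t] by auto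
    then have "F r (frac t) \<in> (\<lambda>(a, b). F a b) ` ?K" by (rule rev_image_eqI) simp
    then have "\<bar>F r (frac t)\<bar> \<le> B" using B by blast
    then show "\<bar>F r t\<bar> \<le> max B 0" using p1 by simp
  qed simp
qed

lemma bound_per:
  fixes g :: "real \<Rightarrow> real"
  assumes "continuous_on UNIV g" "\<And>t. g (t + 1) = g t"
  shows "\<exists>L\<ge>0. \<forall>t. \<bar>g t\<bar> \<le> L"
proof -
  have "compact (g ` {0..1})"
    by (intro compact_continuous_image compact_Icc continuous_on_subset[OF assms(1)]) auto
  then have "bounded (g ` {0..1})" by (rule compact_imp_bounded)
  then obtain B where B: "\<And>x. x \<in> g ` {0..1} \<Longrightarrow> \<bar>x\<bar> \<le> B"
    unfolding bounded_real by blast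
  show ?thesis
  proof (intro exI[of _ "max B 0"] conjI allI)
    fix t
    have "g t = g (frac t)" by (rule per_frac[of g]) (use assms in auto)
    moreover have "frac t \<in> {0..1}" using frac_ge_0[of t] frac_lt_1[of t] by auto
    ultimately show "\<bar>g t\<bar> \<le> max B 0" using B by force
  qed simp
qed

lemma max_per_neg:
  fixes g :: "real \<Rightarrow> real"
  assumes "continuous_on UNIV g" "\<And>t. g (t + 1) = g t" "\<And>t. g t < 0"
  shows "\<exists>m>0. \<forall>t. g t \<le> - 2 * m"
proof -
  have "\<exists>x\<in>{0..1::real}. \<forall>y\<in>{0..1}. g y \<le> g x"
    by (rule continuous_attains_sup) (auto intro: continuous_on_subset[OF assms(1)])
  then obtain x where x: "x \<in> {0..1}" "\<And>y. y \<in> {0..1} \<Longrightarrow> g y \<le> g x" by blast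
  show ?thesis
  proof (intro exI[of _ "- g x / 2"] conjI allI)
    show "- g x / 2 > 0" using assms(3)[of x] by simp
    fix t
    have "g t = g (frac t)" by (rule per_frac[of g]) (use assms in auto)
    moreover have "frac t \<in> {0..1}" using frac_ge_0[of t] frac_lt_1[of t] by auto
    ultimately show "g t \<le> - 2 * (- g x / 2)" using x by force
  qed
qed


lemma conv_bound:
  fixes \<mu> X Y e :: real
  assumes "0 \<le> \<mu>" "\<mu> \<le> 1" "\<bar>X\<bar> \<le> e" "\<bar>Y\<bar> \<le> e"
  shows "\<bar>\<mu> * X + (1 - \<mu>) * Y\<bar> \<le> e"
proof -
  have "\<bar>\<mu> * X + (1 - \<mu>) * Y\<bar> \<le> \<bar>\<mu> * X\<bar> + \<bar>(1 - \<mu>) * Y\<bar>" by (rule abs_triangle_ineq)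
  also have "\<dots> = \<mu> * \<bar>X\<bar> + (1 - \<mu>) * \<bar>Y\<bar>" using assms by (simp add: abs_mult)
  also have "\<dots> \<le> \<mu> * e + (1 - \<mu>) * e"
    using assms by (intro add_mono mult_left_mono) auto
  finally show ?thesis by (simp add: algebra_simps)
qed

lemma final_ineq:
  fixes r m U W V a B C L D :: real
  assumes "D = r * U + W + r * a * V" "U \<le> - m" "\<bar>W\<bar> \<le> 2 * \<bar>C\<bar> * r\<^sup>2"
    "\<bar>V\<bar> \<le> 2 * \<bar>C\<bar> * r\<^sup>2 + L * r" "\<bar>a\<bar> \<le> B" "0 \<le> B" "0 \<le> L" "0 < r" "r < 1"
    "r * (2 * \<bar>C\<bar> + 2 * B * \<bar>C\<bar> + B * L + 1) < m"
  shows "D < 0"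
proof -
  have "\<bar>r * a * V\<bar> \<le> r * B * (2 * \<bar>C\<bar> * r\<^sup>2 + L * r)"
    using assms by (simp add: abs_mult mult_mono mult_left_mono)
  also have "\<dots> \<le> r * B * (2 * \<bar>C\<bar> * r + L * r)"
    using assms by (intro mult_left_mono add_mono) (auto simp: power2_eq_square)
  finally have A: "\<bar>r * a * V\<bar> \<le> r * (r * (2 * B * \<bar>C\<bar> + B * L))" by (simp add: algebra_simps)
  have "r * U \<le> r * (- m)" using assms by (intro mult_left_mono) auto
  moreover have "\<bar>W\<bar> \<le> r * (r * (2 * \<bar>C\<bar>))" using assms by (simp add: power2_eq_square algebra_simps)
  moreover have "r * (r * (2 * \<bar>C\<bar> + 2 * B * \<bar>C\<bar> + B * L + 1)) < r * m"
    using assms by (intro mult_strict_left_mono) auto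
  ultimately have "D \<le> r * (- m) + r * (r * (2 * \<bar>C\<bar>)) + r * (r * (2 * B * \<bar>C\<bar> + B * L))"
    using assms(1) A by (auto simp: algebra_simps abs_le_iff)
  moreover have "r * (r * (2 * \<bar>C\<bar>)) + r * (r * (2 * B * \<bar>C\<bar> + B * L)) < r * m"
    using \<open>r * (r * (2 * \<bar>C\<bar> + 2 * B * \<bar>C\<bar> + B * L + 1)) < r * m\<close> mult_pos_pos[OF assms(8) assms(8)]
    by (simp add: algebra_simps)
  ultimately show ?thesis by linarith
qed


theorem lemma3p3:
  fixes eps :: real
    and lam :: "real \<Rightarrow> real"
    and Y1 Y2 :: "real \<times> real \<times> real \<Rightarrow> real"
    and \<theta> \<theta>r \<theta>t \<omega> \<omega>r \<omega>t :: "real \<Rightarrow> real \<Rightarrow> real"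
  assumes eps_pos: "eps > 0"
    and lam_cont: "continuous_on UNIV lam"
    and lam_per: "\<And>t. lam (t + 1) = lam t"
    and Y_per: "\<And>x y t. Y1 (x, y, t + 1) = Y1 (x, y, t) \<and> Y2 (x, y, t + 1) = Y2 (x, y, t)"
    and Y_approx: "\<exists>C \<delta>. \<delta> > 0 \<and> (\<forall>x y t. x\<^sup>2 + y\<^sup>2 < \<delta> \<longrightarrow>
                \<bar>Y1 (x, y, t) - lam t * x\<bar> \<le> C * (x\<^sup>2 + y\<^sup>2) \<and>
                \<bar>Y2 (x, y, t) + lam t * y\<bar> \<le> C * (x\<^sup>2 + y\<^sup>2))"
    and \<theta>_C1: "C1_strip eps \<theta> \<theta>r \<theta>t"
    and \<omega>_C1: "C1_strip eps \<omega> \<omega>r \<omega>t"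
    and twist: "\<And>t. \<theta>t 0 t < - lam t * sin (2 * \<theta> 0 t)"
    and same_bdry: "\<And>t. \<omega> 0 t = \<theta> 0 t"
  shows "\<exists>\<rho>0 > 0. \<forall>\<mu> \<in> {0..1}. \<forall>r t. 0 < r \<and> r < \<rho>0 \<longrightarrow>
           transversal_at (surfH (\<lambda>r t. \<mu> * \<omega> r t + (1 - \<mu>) * \<theta> r t))
                          (\<lambda>p. (Y1 p, Y2 p, 1)) (r, t)"
proof -
  obtain C \<delta> where \<delta>: "\<delta> > 0" and Yb: "\<And>x y t. x\<^sup>2 + y\<^sup>2 < \<delta> \<Longrightarrow>
                \<bar>Y1 (x, y, t) - lam t * x\<bar> \<le> C * (x\<^sup>2 + y\<^sup>2) \<and>
                \<bar>Y2 (x, y, t) + lam t * y\<bar> \<le> C * (x\<^sup>2 + y\<^sup>2)"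
    using Y_approx by blast
  obtain L where L0: "L \<ge> 0" and L: "\<And>t. \<bar>lam t\<bar> \<le> L" using bound_per[OF lam_cont lam_per] by blast
  have \<theta>c: "continuous_on ({0..<eps} \<times> UNIV) (\<lambda>(a, b). \<theta> a b)" by (rule C1_cont[OF \<theta>_C1])
  have \<omega>c: "continuous_on ({0..<eps} \<times> UNIV) (\<lambda>(a, b). \<omega> a b)" by (rule C1_cont[OF \<omega>_C1])
  have \<theta>tc: "continuous_on ({0..<eps} \<times> UNIV) (\<lambda>(a, b). \<theta>t a b)"
   and \<theta>rc: "continuous_on ({0..<eps} \<times> UNIV) (\<lambda>(a, b). \<theta>r a b)"
   and \<theta>per: "\<And>r t. 0 \<le> r \<Longrightarrow> r < eps \<Longrightarrow> \<theta> r (t + 1) = \<theta> r t"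
    using \<theta>_C1 unfolding C1_strip_def by auto
  have \<omega>tc: "continuous_on ({0..<eps} \<times> UNIV) (\<lambda>(a, b). \<omega>t a b)"
   and \<omega>rc: "continuous_on ({0..<eps} \<times> UNIV) (\<lambda>(a, b). \<omega>r a b)"
   and \<omega>per: "\<And>r t. 0 \<le> r \<Longrightarrow> r < eps \<Longrightarrow> \<omega> r (t + 1) = \<omega> r t"
    using \<omega>_C1 unfolding C1_strip_def by auto
  have restr: "continuous_on UNIV (\<lambda>t. F 0 t)" if "continuous_on ({0..<eps} \<times> UNIV) (\<lambda>(a, b). F a b)" for F
  proof -
    have "continuous_on UNIV (\<lambda>t. (\<lambda>(a, b). F a b) ((\<lambda>t. (0::real, t)) t))"
      by (rule continuous_on_compose2[OF that]) (use eps_pos in \<open>auto intro!: continuous_intros\<close>)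
    then show ?thesis by simp
  qed
  define g0 where "g0 = (\<lambda>t. \<theta>t 0 t + lam t * sin (2 * \<theta> 0 t))"
  have g0c: "continuous_on UNIV g0" unfolding g0_def
    using restr[OF \<theta>tc] restr[OF \<theta>c] lam_cont by (intro continuous_intros) auto
  have g0p: "g0 (t + 1) = g0 t" for t
    unfolding g0_def using C1_per_t[OF \<theta>_C1, of 0] \<theta>per[of 0] lam_per eps_pos by simp
  have g0n: "g0 t < 0" for t unfolding g0_def using twist[of t] by simp
  obtain m where m0: "m > 0" and m: "\<And>t. g0 t \<le> - 2 * m" using max_per_neg[OF g0c g0p g0n] by blast
  have \<omega>t0: "\<omega>t 0 t = \<theta>t 0 t" for t
  proof -
    have "((\<lambda>b. \<theta> 0 b) has_real_derivative \<omega>t 0 t) (at t)"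
      using C1_dt[OF \<omega>_C1, of 0 t] eps_pos same_bdry by simp
    then show ?thesis using C1_dt[OF \<theta>_C1, of 0 t] eps_pos DERIV_unique by blast
  qed
  obtain d1 where d1: "d1 > 0" "\<And>r t. 0 \<le> r \<and> r < d1 \<Longrightarrow> \<bar>\<theta>t r t - \<theta>t 0 t\<bar> < m / 2"
    using unif_near0[OF \<theta>tc eps_pos, of "m/2"] C1_per_t[OF \<theta>_C1] m0 by auto
  obtain d2 where d2: "d2 > 0" "\<And>r t. 0 \<le> r \<and> r < d2 \<Longrightarrow> \<bar>\<omega>t r t - \<omega>t 0 t\<bar> < m / 2"
    using unif_near0[OF \<omega>tc eps_pos, of "m/2"] C1_per_t[OF \<omega>_C1] m0 by auto
  obtain d3 where d3: "d3 > 0" "\<And>r t. 0 \<le> r \<and> r < d3 \<Longrightarrow> \<bar>\<theta> r t - \<theta> 0 t\<bar> < m / (4 * (L + 1))"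
    using unif_near0[OF \<theta>c eps_pos, of "m / (4 * (L + 1))"] \<theta>per m0 L0 by auto
  obtain d4 where d4: "d4 > 0" "\<And>r t. 0 \<le> r \<and> r < d4 \<Longrightarrow> \<bar>\<omega> r t - \<omega> 0 t\<bar> < m / (4 * (L + 1))"
    using unif_near0[OF \<omega>c eps_pos, of "m / (4 * (L + 1))"] \<omega>per m0 L0 by auto
  obtain B1 where B1: "B1 \<ge> 0" "\<And>r t. 0 < r \<and> r \<le> eps/2 \<Longrightarrow> \<bar>\<theta>r r t\<bar> \<le> B1"
    using bound_strip[OF \<theta>rc eps_pos] C1_per_r[OF \<theta>_C1] by auto
  obtain B2 where B2: "B2 \<ge> 0" "\<And>r t. 0 < r \<and> r \<le> eps/2 \<Longrightarrow> \<bar>\<omega>r r t\<bar> \<le> B2"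
    using bound_strip[OF \<omega>rc eps_pos] C1_per_r[OF \<omega>_C1] by auto
  define B where "B = max B1 B2"
  define K0 where "K0 = 2 * \<bar>C\<bar> + 2 * B * \<bar>C\<bar> + B * L + 1"
  have B0: "B \<ge> 0" unfolding B_def using B1 by simp
  have K0: "K0 \<ge> 1" unfolding K0_def using B0 L0 by simp
  define \<rho>0 where "\<rho>0 = min (min (min d1 d2) (min d3 d4)) (min (min (eps/2) 1) (min \<delta> (m / K0)))"
  have \<rho>0: "\<rho>0 > 0" unfolding \<rho>0_def using d1 d2 d3 d4 eps_pos \<delta> m0 K0 by auto
  show ?thesis
  proof (intro exI[of _ \<rho>0] conjI ballI allI impI)
    show "\<rho>0 > 0" by (rule \<rho>0)
    fix \<mu> :: real and r t :: real
    assume \<mu>: "\<mu> \<in> {0..1}" and r: "0 < r \<and> r < \<rho>0"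
    define \<Phi> where "\<Phi> = (\<lambda>r t. \<mu> * \<omega> r t + (1 - \<mu>) * \<theta> r t)"
    define a where "a = \<mu> * \<omega>r r t + (1 - \<mu>) * \<theta>r r t"
    define b where "b = \<mu> * \<omega>t r t + (1 - \<mu>) * \<theta>t r t"
    have rlt: "r < d1" "r < d2" "r < d3" "r < d4" "r \<le> eps/2" "r < 1" "r < \<delta>" "r < m / K0"
      using r unfolding \<rho>0_def by auto
    have reps: "r < eps" using rlt eps_pos by linarith
    have "((\<lambda>p. \<Phi> (fst p) (snd p)) has_derivative
        (\<lambda>p. \<mu> * (fst p * \<omega>r r t + snd p * \<omega>t r t) + (1 - \<mu>) * (fst p * \<theta>r r t + snd p * \<theta>t r t))) (at (r, t))"
      unfolding \<Phi>_def using r reps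
      by (intro has_derivative_add has_derivative_mult_right C1_at[OF \<omega>_C1] C1_at[OF \<theta>_C1]) auto
    moreover have "(\<lambda>p. \<mu> * (fst p * \<omega>r r t + snd p * \<omega>t r t) + (1 - \<mu>) * (fst p * \<theta>r r t + snd p * \<theta>t r t))
        = (\<lambda>p. fst p * a + snd p * b)" unfolding a_def b_def by (auto simp: fun_eq_iff algebra_simps)
    ultimately have dPhi: "((\<lambda>p. \<Phi> (fst p) (snd p)) has_derivative (\<lambda>p. fst p * a + snd p * b)) (at (r, t))"
      by simp
    define c where "c = cos (\<Phi> r t)"
    define s where "s = sin (\<Phi> r t)"
    have sc: "s\<^sup>2 + c\<^sup>2 = 1" unfolding s_def c_def by simp
    have Hp: "surfH \<Phi> (r, t) = (r * c, r * s, t)" unfolding surfH_def c_def s_def by simp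
    define y1 where "y1 = Y1 (r * c, r * s, t)"
    define y2 where "y2 = Y2 (r * c, r * s, t)"
    define E1 where "E1 = y1 - lam t * (r * c)"
    define E2 where "E2 = y2 + lam t * (r * s)"
    have "(r * c)\<^sup>2 + (r * s)\<^sup>2 = r\<^sup>2 * (s\<^sup>2 + c\<^sup>2)" by (simp add: power_mult_distrib algebra_simps)
    then have rr: "(r * c)\<^sup>2 + (r * s)\<^sup>2 = r\<^sup>2" using sc by simp
    have "r\<^sup>2 < \<delta>" using rlt r by (simp add: power2_eq_square) (smt (verit) mult_strict_left_mono mult_less_cancel_left1)
    then have "\<bar>E1\<bar> \<le> C * r\<^sup>2 \<and> \<bar>E2\<bar> \<le> C * r\<^sup>2"
      using Yb[of "r * c" "r * s" t] unfolding E1_def E2_def y1_def y2_def rr by blast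
    moreover have "C * r\<^sup>2 \<le> \<bar>C\<bar> * r\<^sup>2" by (intro mult_right_mono) auto
    ultimately have E: "\<bar>E1\<bar> \<le> \<bar>C\<bar> * r\<^sup>2" "\<bar>E2\<bar> \<le> \<bar>C\<bar> * r\<^sup>2" by linarith+
    define D where "D = (y1 + r * s * b) * (s + r * c * a) - (y2 - r * c * b) * (c - r * s * a)"
    define U where "U = b + lam t * sin (2 * \<Phi> r t)"
    define W where "W = E1 * s - E2 * c"
    define V where "V = E1 * c + E2 * s + lam t * r * (c\<^sup>2 - s\<^sup>2)"
    have "D = r * b * (s\<^sup>2 + c\<^sup>2) + (y1 * s - y2 * c) + r * a * (y1 * c + y2 * s)"
      unfolding D_def by algebra
    also have "\<dots> = r * U + W + r * a * V"
    proof -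
      have s2: "sin (2 * \<Phi> r t) = 2 * s * c" by (simp add: sin_double s_def c_def)
      show ?thesis unfolding U_def W_def V_def E1_def E2_def sc s2 by algebra
    qed
    finally have Deq: "D = r * U + W + r * a * V" .
    have \<mu>01: "0 \<le> \<mu>" "\<mu> \<le> 1" using \<mu> by auto
    have U1: "\<bar>b - \<theta>t 0 t\<bar> \<le> m / 2"
    proof -
      have "b - \<theta>t 0 t = \<mu> * (\<omega>t r t - \<omega>t 0 t) + (1 - \<mu>) * (\<theta>t r t - \<theta>t 0 t)"
        unfolding b_def \<omega>t0 by (simp add: algebra_simps)
      moreover have "\<bar>\<omega>t r t - \<omega>t 0 t\<bar> \<le> m / 2" using d2(2)[of r t] rlt r by fastforce
      moreover have "\<bar>\<theta>t r t - \<theta>t 0 t\<bar> \<le> m / 2" using d1(2)[of r t] rlt r by fastforce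
      ultimately show ?thesis using conv_bound[OF \<mu>01, of "\<omega>t r t - \<omega>t 0 t" "m / 2" "\<theta>t r t - \<theta>t 0 t"] by simp
    qed
    have U2: "\<bar>\<Phi> r t - \<theta> 0 t\<bar> \<le> m / (4 * (L + 1))"
    proof -
      have "\<Phi> r t - \<theta> 0 t = \<mu> * (\<omega> r t - \<omega> 0 t) + (1 - \<mu>) * (\<theta> r t - \<theta> 0 t)"
        unfolding \<Phi>_def same_bdry by (simp add: algebra_simps)
      moreover have "\<bar>\<omega> r t - \<omega> 0 t\<bar> \<le> m / (4 * (L + 1))" using d4(2)[of r t] rlt r by fastforce
      moreover have "\<bar>\<theta> r t - \<theta> 0 t\<bar> \<le> m / (4 * (L + 1))" using d3(2)[of r t] rlt r by fastforce
      ultimately show ?thesis using conv_bound[OF \<mu>01, of "\<omega> r t - \<omega> 0 t" "m / (4 * (L + 1))" "\<theta> r t - \<theta> 0 t"] by simp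
    qed
    have U3: "\<bar>lam t * sin (2 * \<Phi> r t) - lam t * sin (2 * \<theta> 0 t)\<bar> \<le> m / 2"
    proof -
      have "\<bar>lam t * sin (2 * \<Phi> r t) - lam t * sin (2 * \<theta> 0 t)\<bar>
          = \<bar>lam t\<bar> * \<bar>sin (2 * \<Phi> r t) - sin (2 * \<theta> 0 t)\<bar>" by (simp add: abs_mult[symmetric] right_diff_distrib)
      also have "\<dots> \<le> L * (2 * \<bar>\<Phi> r t - \<theta> 0 t\<bar>)"
      proof -
        have "2 * \<Phi> r t - 2 * \<theta> 0 t = 2 * (\<Phi> r t - \<theta> 0 t)" by simp
        then have "\<bar>2 * \<Phi> r t - 2 * \<theta> 0 t\<bar> = 2 * \<bar>\<Phi> r t - \<theta> 0 t\<bar>" by (simp only: abs_mult)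
        then show ?thesis using sin_lip[of "2 * \<Phi> r t" "2 * \<theta> 0 t"] L[of t] L0
          by (intro mult_mono) auto
      qed
      also have "\<dots> \<le> L * (2 * (m / (4 * (L + 1))))"
        using U2 L0 by (intro mult_left_mono) auto
      also have "\<dots> \<le> m / 2" using L0 m0 by (simp add: field_simps)
      finally show ?thesis .
    qed
    have UU: "U \<le> - m" using U1 U3 m[of t] unfolding U_def g0_def abs_le_iff by linarith
    have WW: "\<bar>W\<bar> \<le> 2 * \<bar>C\<bar> * r\<^sup>2"
    proof -
      have "\<bar>W\<bar> \<le> \<bar>E1\<bar> * \<bar>s\<bar> + \<bar>E2\<bar> * \<bar>c\<bar>" unfolding W_def
        using abs_triangle_ineq4[of "E1 * s" "E2 * c"] by (simp add: abs_mult)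
      also have "\<dots> \<le> \<bar>C\<bar> * r\<^sup>2 * 1 + \<bar>C\<bar> * r\<^sup>2 * 1"
        using E unfolding s_def c_def by (intro add_mono mult_mono) auto
      finally show ?thesis by simp
    qed
    have cs1: "\<bar>c\<^sup>2 - s\<^sup>2\<bar> \<le> 1" using sc zero_le_power2[of c] zero_le_power2[of s] unfolding abs_le_iff by linarith
    have VV: "\<bar>V\<bar> \<le> 2 * \<bar>C\<bar> * r\<^sup>2 + L * r"
    proof -
      have "\<bar>V\<bar> \<le> \<bar>E1\<bar> * \<bar>c\<bar> + \<bar>E2\<bar> * \<bar>s\<bar> + \<bar>lam t\<bar> * r * \<bar>c\<^sup>2 - s\<^sup>2\<bar>" unfolding V_def
      proof -
        have "\<bar>E1 * c + E2 * s + lam t * r * (c\<^sup>2 - s\<^sup>2)\<bar> \<le> \<bar>E1 * c\<bar> + \<bar>E2 * s\<bar> + \<bar>lam t * r * (c\<^sup>2 - s\<^sup>2)\<bar>"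
          using abs_triangle_ineq[of "E1 * c + E2 * s" "lam t * r * (c\<^sup>2 - s\<^sup>2)"] abs_triangle_ineq[of "E1 * c" "E2 * s"]
          by linarith
        then show "\<bar>E1 * c + E2 * s + lam t * r * (c\<^sup>2 - s\<^sup>2)\<bar> \<le> \<bar>E1\<bar> * \<bar>c\<bar> + \<bar>E2\<bar> * \<bar>s\<bar> + \<bar>lam t\<bar> * r * \<bar>c\<^sup>2 - s\<^sup>2\<bar>"
          using r by (simp add: abs_mult)
      qed
      also have "\<dots> \<le> \<bar>C\<bar> * r\<^sup>2 * 1 + \<bar>C\<bar> * r\<^sup>2 * 1 + L * r * 1"
        using E L[of t] cs1 r unfolding s_def c_def by (intro add_mono mult_mono) auto
      finally show ?thesis by simp
    qed
    have "\<bar>\<omega>r r t\<bar> \<le> B" using B2(2)[of r t] rlt r unfolding B_def by auto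
    moreover have "\<bar>\<theta>r r t\<bar> \<le> B" using B1(2)[of r t] rlt r unfolding B_def by auto
    ultimately have aa: "\<bar>a\<bar> \<le> B"
      unfolding a_def using conv_bound[OF \<mu>01, of "\<omega>r r t" B "\<theta>r r t"] by blast
    have "r * K0 < m" using rlt K0 by (simp add: field_simps)
    then have "r * (2 * \<bar>C\<bar> + 2 * B * \<bar>C\<bar> + B * L + 1) < m" unfolding K0_def .
    then have "D < 0"
      using final_ineq[OF Deq UU WW VV aa B0 L0] r rlt(6) by blast
    then have "D \<noteq> 0" by simp
    then show "transversal_at (surfH (\<lambda>r t. \<mu> * \<omega> r t + (1 - \<mu>) * \<theta> r t)) (\<lambda>p. (Y1 p, Y2 p, 1)) (r, t)"
    proof -
      have "transversal_at (surfH \<Phi>) (\<lambda>p. (Y1 p, Y2 p, 1)) (r, t)"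
        apply (rule transv_det[OF surfH_deriv[OF dPhi]])
        using \<open>D \<noteq> 0\<close> unfolding Hp D_def y1_def y2_def c_def s_def .
      then show ?thesis unfolding \<Phi>_def .
    qed
  qed
qed

end
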